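(* Let $J$ be a countable set and $\mathcal{A}$ the non-unital algebra of finitely supported functions $J\to\mathbb{R}$ with pointwise operations. Let $\sigma:J\to J$ be a bijection and $\tilde{\sigma}(f)=f\circ\sigma^{-1}$. The center of the skew polynomial ring $\mathcal{A}[x,\tilde{\sigma},0]$ is $$Z(\mathcal{A}[x,\tilde{\sigma},0])=\Big\{\sum_{k=0}^m f_kx^k : f_k\in\mathcal{A},\ f_k=0\text{ on } Sep^k(J)\text{ and }\tilde{\sigma}(f_k)=f_k\text{ for all }k\Big\}.$$
   Context: $\mathcal{A}[x,\tilde{\sigma},0]$ is the set of formal sums $\sum_{k=0}^m f_kx^k$ with $f_k\in\mathcal{A}$, with coefficientwise addition and multiplication the bilinear extension of $(fx^k)(gx^l)=f\,\tilde{\sigma}^k(g)\,x^{k+l}$. For an integer $k$, $Sep^k(J)=\{p\in J:\sigma^k(p)\neq p\}$ (so $Sep^0(J)=\emptyset$). *)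

theory Defs
  imports Complex_Main "HOL-Library.Countable"
begin

definition fin_supp :: "('j \<Rightarrow> real) \<Rightarrow> bool" where
  "fin_supp f \<longleftrightarrow> finite {j. f j \<noteq> 0}"

definition sigma_tilde :: "('j \<Rightarrow> 'j) \<Rightarrow> ('j \<Rightarrow> real) \<Rightarrow> ('j \<Rightarrow> real)" where
  "sigma_tilde \<sigma> f = f \<circ> inv \<sigma>"

text \<open>Elements of A[x,sigma~,0]: coefficient sequences k \<mapsto> f_k, finitely many nonzero,
  each in A.\<close>
definition skew_carrier :: "(nat \<Rightarrow> 'j \<Rightarrow> real) set" where
  "skew_carrier = {p. finite {k. p k \<noteq> (\<lambda>_. 0)} \<and> (\<forall>k. fin_supp (p k))}"

text \<open>Multiplication: bilinear extension of (f x^k)(g x^l) = f sigma~^k(g) x^(k+l).\<close>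
definition skew_mult :: "('j \<Rightarrow> 'j) \<Rightarrow> (nat \<Rightarrow> 'j \<Rightarrow> real) \<Rightarrow> (nat \<Rightarrow> 'j \<Rightarrow> real)
    \<Rightarrow> (nat \<Rightarrow> 'j \<Rightarrow> real)" where
  "skew_mult \<sigma> p q = (\<lambda>n j. \<Sum>k\<le>n. p k j * ((sigma_tilde \<sigma> ^^ k) (q (n - k))) j)"

definition skew_center :: "('j \<Rightarrow> 'j) \<Rightarrow> (nat \<Rightarrow> 'j \<Rightarrow> real) set" where
  "skew_center \<sigma> = {p \<in> skew_carrier. \<forall>q \<in> skew_carrier. skew_mult \<sigma> p q = skew_mult \<sigma> q p}"

definition Sep :: "('j \<Rightarrow> 'j) \<Rightarrow> nat \<Rightarrow> 'j set" where
  "Sep \<sigma> k = {p. (\<sigma> ^^ k) p \<noteq> p}"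

end

theory Submission
  imports Defs
begin

lemma st_pow: "(sigma_tilde \<sigma> ^^ k) q = q \<circ> (inv \<sigma> ^^ k)"
  by (induction k) (auto simp: sigma_tilde_def funpow_swap1)

lemma inv_pow_cancel:
  fixes \<sigma> :: "'a \<Rightarrow> 'a"
  assumes "bij \<sigma>" shows "(inv \<sigma> ^^ k) ((\<sigma> ^^ k) j) = j"
proof (induction k arbitrary: j)
  case (Suc k)
  have "(inv \<sigma> ^^ Suc k) ((\<sigma> ^^ Suc k) j) = (inv \<sigma> ^^ k) (inv \<sigma> (\<sigma> ((\<sigma> ^^ k) j)))"
    by (simp only: funpow_Suc_right[where f="inv \<sigma>"] funpow.simps(2)[where f="\<sigma>"] comp_apply)
  also have "\<dots> = j" using assms Suc by (simp add: bij_is_inj)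
  finally show ?case .
qed simp

lemma pow_inv_cancel:
  fixes \<sigma> :: "'a \<Rightarrow> 'a"
  assumes "bij \<sigma>" shows "(\<sigma> ^^ k) ((inv \<sigma> ^^ k) j) = j"
proof (induction k arbitrary: j)
  case (Suc k)
  have "(\<sigma> ^^ Suc k) ((inv \<sigma> ^^ Suc k) j) = (\<sigma> ^^ k) (\<sigma> (inv \<sigma> ((inv \<sigma> ^^ k) j)))"
    by (simp only: funpow_Suc_right[where f="\<sigma>"] funpow.simps(2)[where f="inv \<sigma>"] comp_apply)
  also have "\<dots> = j" using assms Suc by (simp add: bij_is_surj surj_f_inv_f)
  finally show ?case .
qed simp

lemma fix_iff:
  fixes \<sigma> :: "'a \<Rightarrow> 'a"
  assumes "bij \<sigma>" shows "(inv \<sigma> ^^ k) j = j \<longleftrightarrow> (\<sigma> ^^ k) j = j"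
  by (metis assms inv_pow_cancel pow_inv_cancel)

lemma inv_fix_pow:
  assumes "f \<circ> inv \<sigma> = f" shows "f ((inv \<sigma> ^^ k) j) = f j"
proof (induction k arbitrary: j)
  case (Suc k)
  have "f ((inv \<sigma> ^^ Suc k) j) = f ((inv \<sigma> ^^ k) (inv \<sigma> j))"
    by (simp only: funpow_Suc_right[where f="inv \<sigma>"] comp_apply)
  also have "\<dots> = f (inv \<sigma> j)" using Suc by simp
  also have "\<dots> = f j" using assms by (metis comp_apply)
  finally show ?case .
qed simp

definition single :: "nat \<Rightarrow> ('j \<Rightarrow> real) \<Rightarrow> nat \<Rightarrow> 'j \<Rightarrow> real" where
  "single l g = (\<lambda>m. if m = l then g else (\<lambda>_. 0))"

lemma single_carrier: "fin_supp g \<Longrightarrow> single l g \<in> skew_carrier"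
proof -
  assume g: "fin_supp g"
  have "{k. single l g k \<noteq> (\<lambda>_. 0)} \<subseteq> {l}" by (auto simp: single_def)
  then have "finite {k. single l g k \<noteq> (\<lambda>_. 0)}" using finite_subset by blast
  moreover have "fin_supp (single l g k)" for k
    using g by (auto simp: single_def fin_supp_def)
  ultimately show ?thesis by (simp add: skew_carrier_def)
qed

lemma mult_single_right:
  "skew_mult \<sigma> p (single l g) n j = (if l \<le> n then p (n-l) j * g ((inv \<sigma> ^^ (n-l)) j) else 0)"
proof -
  have "skew_mult \<sigma> p (single l g) n j =
      (\<Sum>k\<le>n. if k = n - l \<and> l \<le> n then p (n-l) j * g ((inv \<sigma> ^^ (n-l)) j) else 0)"
    unfolding skew_mult_def st_pow
    by (intro sum.cong refl) (auto simp: single_def)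
  also have "\<dots> = (if l \<le> n then p (n-l) j * g ((inv \<sigma> ^^ (n-l)) j) else 0)"
    by (cases "l \<le> n") (simp_all add: sum.delta)
  finally show ?thesis .
qed

lemma mult_single_left:
  "skew_mult \<sigma> (single l g) p n j = (if l \<le> n then g j * p (n-l) ((inv \<sigma> ^^ l) j) else 0)"
proof -
  have "skew_mult \<sigma> (single l g) p n j =
      (\<Sum>k\<le>n. if k = l \<and> l \<le> n then g j * p (n-l) ((inv \<sigma> ^^ l) j) else 0)"
    unfolding skew_mult_def st_pow
    by (intro sum.cong refl) (auto simp: single_def)
  also have "\<dots> = (if l \<le> n then g j * p (n-l) ((inv \<sigma> ^^ l) j) else 0)"
    by (cases "l \<le> n") (simp_all add: sum.delta)
  finally show ?thesis .
qed

theorem theorem9: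
  fixes \<sigma> :: "'j::countable \<Rightarrow> 'j"
  assumes "bij \<sigma>"
  shows "skew_center \<sigma> =
    {p \<in> skew_carrier. \<forall>k. (\<forall>j \<in> Sep \<sigma> k. p k j = 0) \<and> sigma_tilde \<sigma> (p k) = p k}"
proof (intro set_eqI iffI)
  fix p assume "p \<in> skew_center \<sigma>"
  then have pc: "p \<in> skew_carrier" and comm: "\<And>q. q \<in> skew_carrier \<Longrightarrow> skew_mult \<sigma> p q = skew_mult \<sigma> q p"
    by (auto simp: skew_center_def)
  let ?g = "\<lambda>j::'j. \<lambda>i. if i = j then (1::real) else 0"
  have fg: "fin_supp (?g j)" for j by (simp add: fin_supp_def)
  have Z: "p k j = 0" if "j \<in> Sep \<sigma> k" for k j
  proof -
    have "skew_mult \<sigma> p (single 0 (?g j)) k j = skew_mult \<sigma> (single 0 (?g j)) p k j"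
      using comm[OF single_carrier[OF fg]] by simp
    then have "p k j * ?g j ((inv \<sigma> ^^ k) j) = p k j"
      by (simp add: mult_single_right mult_single_left)
    moreover have "(inv \<sigma> ^^ k) j \<noteq> j" using that fix_iff[OF assms] by (simp add: Sep_def)
    ultimately show ?thesis by simp
  qed
  have I: "sigma_tilde \<sigma> (p k) = p k" for k
  proof
    fix j
    have "skew_mult \<sigma> p (single 1 (?g j)) (Suc k) j = skew_mult \<sigma> (single 1 (?g j)) p (Suc k) j"
      using comm[OF single_carrier[OF fg]] by simp
    then have e: "p k j * ?g j ((inv \<sigma> ^^ k) j) = p k (inv \<sigma> j)"
      by (simp add: mult_single_right mult_single_left)
    show "sigma_tilde \<sigma> (p k) j = p k j"
    proof (cases "(inv \<sigma> ^^ k) j = j")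
      case True then show ?thesis using e by (simp add: sigma_tilde_def)
    next
      case False
      then have "j \<in> Sep \<sigma> k" using fix_iff[OF assms] by (simp add: Sep_def)
      then show ?thesis using e Z False by (simp add: sigma_tilde_def)
    qed
  qed
  show "p \<in> {p \<in> skew_carrier. \<forall>k. (\<forall>j \<in> Sep \<sigma> k. p k j = 0) \<and> sigma_tilde \<sigma> (p k) = p k}"
    using pc Z I by blast
next
  fix p assume "p \<in> {p \<in> skew_carrier. \<forall>k. (\<forall>j \<in> Sep \<sigma> k. p k j = 0) \<and> sigma_tilde \<sigma> (p k) = p k}"
  then have pc: "p \<in> skew_carrier" and Z: "\<And>k j. j \<in> Sep \<sigma> k \<Longrightarrow> p k j = 0"
    and I: "\<And>k. sigma_tilde \<sigma> (p k) = p k" by auto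
  have I': "p k ((inv \<sigma> ^^ i) j) = p k j" for k i j
    by (rule inv_fix_pow) (use I[of k] in \<open>simp add: sigma_tilde_def\<close>)
  have "skew_mult \<sigma> p q = skew_mult \<sigma> q p" for q
  proof (intro ext)
    fix n j
    have "skew_mult \<sigma> p q n j = (\<Sum>k\<le>n. p k j * q (n-k) j)"
      unfolding skew_mult_def st_pow
    proof (intro sum.cong refl)
      fix k
      show "p k j * (q (n - k) \<circ> (inv \<sigma> ^^ k)) j = p k j * q (n - k) j"
      proof (cases "j \<in> Sep \<sigma> k")
        case True then show ?thesis using Z by simp
      next
        case False
        then have "(inv \<sigma> ^^ k) j = j" using fix_iff[OF assms] by (simp add: Sep_def)
        then show ?thesis by simp
      qed
    qed
    also have "\<dots> = (\<Sum>k\<le>n. q k j * p (n-k) j)"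
      by (rule sum.reindex_bij_witness[where i="\<lambda>k. n - k" and j="\<lambda>k. n - k"]) auto
    also have "\<dots> = skew_mult \<sigma> q p n j"
      unfolding skew_mult_def st_pow by (simp add: I')
    finally show "skew_mult \<sigma> p q n j = skew_mult \<sigma> q p n j" .
  qed
  then show "p \<in> skew_center \<sigma>" using pc by (simp add: skew_center_def)
qed

end
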